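(* Fix a mobile user $k$, a frame length $T\in\mathbb{N}$, $T\ge 1$, a threshold $\varepsilon\in[0,1]$ and a request probability $\lambda_k\in[0,1]$. For every frame index $q\in\{0,1,2,\ldots\}$, with $\mathcal{T}_q=\{qT,qT+1,\ldots,(q+1)T-1\}$ and $$\Delta\mathcal{L}_k[qT]=\mathbb{E}\left\{\tfrac12 (Y_k[qT+T])^2-\tfrac12 (Y_k[qT])^2 \,\Big|\, Y_k[qT]\right\},$$ we have $$\Delta \mathcal{L}_k[qT]\leq B_{k,2}T+\mathbb{E}\left\{Y_k[qT]\sum_{n\in\mathcal{T}_q}\left(X_k[n]-\varepsilon \right)\,\Big|\, Y_k[qT] \right\},$$ where $B_{k,2}\triangleq \tfrac12(\lambda_k+\varepsilon^2)+\tfrac12(T-1)\left[(1-\varepsilon)\lambda_k+\varepsilon^2\right]$.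
   Context: Time is slotted, $n=0,1,2,\ldots$. In each slot $n$, mobile user $k$ issues a digital-twin synchronization request indicated by $a_k[n]\in\{0,1\}$; the $a_k[n]$ are i.i.d. over slots with $\Pr(a_k[n]=1)=\lambda_k$, and $a_k[n]$ is independent of everything that happened before slot $n$ (in particular, for $n\ge qT$, $a_k[n]$ is independent of $Y_k[qT]$). The synchronization failure indicator $X_k[n]\in\{0,1\}$ equals $1$ only if a request is made and it fails (the twin is migrating during slot $n$, or the synchronization delay exceeds its deadline), so in particular $X_k[n]\le a_k[n]$. The virtual queue is defined by $Y_k[0]=0$ and $Y_k[n+1]=\max\{Y_k[n]+X_k[n]-\varepsilon,\,0\}$. *)

theory Defs
  imports "HOL-Probability.Probability"
begin

fun vqueue :: "real \<Rightarrow> (nat \<Rightarrow> 'a \<Rightarrow> real) \<Rightarrow> nat \<Rightarrow> 'a \<Rightarrow> real" where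
  "vqueue eps X 0 \<omega> = 0"
| "vqueue eps X (Suc n) \<omega> = max (vqueue eps X n \<omega> + X n \<omega> - eps) 0"

definition Bk2 :: "real \<Rightarrow> real \<Rightarrow> nat \<Rightarrow> real" where
  "Bk2 lam eps T = (1/2) * (lam + eps^2) + (1/2) * (real T - 1) * ((1 - eps) * lam + eps^2)"

end

theory Submission
  imports Defs
begin

lemma vq_nonneg: "vqueue eps X n w \<ge> 0"
  by (cases n) auto

lemma vq_le:
  assumes "\<And>n. X n w \<le> 1" "eps \<ge> 0"
  shows "vqueue eps X n w \<le> real n"
  using assms by (induction n) (auto, smt (verit) assms(1))

lemma vq_bounds:
  assumes X01: "\<And>n. X n w \<in> {0,1}" and e: "0 \<le> eps" "eps \<le> 1"
  shows "vqueue eps X s w - real j * eps \<le> vqueue eps X (s + j) w \<and>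
         vqueue eps X (s + j) w \<le> vqueue eps X s w + real j * (1 - eps)"
proof (induction j)
  case 0 then show ?case by simp
next
  case (Suc j)
  have x: "X (s+j) w \<in> {0,1}" using X01 by blast
  have nn: "vqueue eps X (s + j) w \<ge> 0" by (rule vq_nonneg)
  show ?case using Suc x nn e by (auto simp: algebra_simps)
qed

lemma vq_main:
  assumes X01: "\<And>n. X n w \<in> {0,1}" and a01: "\<And>n. a n w \<in> {0,1}"
    and Xa: "\<And>n. X n w \<le> a n w" and e: "0 \<le> eps" "eps \<le> 1"
  shows "(1/2) * (vqueue eps X (s + j) w)^2 - (1/2) * (vqueue eps X s w)^2
     \<le> (\<Sum>i<j. vqueue eps X s w * (X (s+i) w - eps)
              + ((1/2) * eps^2 + real i * eps^2 + ((1/2) + real i * (1 - eps)) * a (s+i) w))"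
proof (induction j)
  case 0 then show ?case by simp
next
  case (Suc j)
  define Y0 where "Y0 = vqueue eps X s w"
  define Yj where "Yj = vqueue eps X (s+j) w"
  define x where "x = X (s+j) w"
  define b where "b = a (s+j) w"
  have x: "x \<in> {0,1}" "b \<in> {0,1}" "x \<le> b" using X01 a01 Xa unfolding x_def b_def by blast+
  have bd: "Y0 - real j * eps \<le> Yj" "Yj \<le> Y0 + real j * (1 - eps)"
    using vq_bounds[of X w eps s j, OF X01 e] unfolding Y0_def Yj_def by auto
  have sq: "(max (Yj + x - eps) 0)^2 \<le> (Yj + x - eps)^2"
    by (cases "Yj + x - eps \<ge> 0") (auto simp: max_def)
  have cross: "(Yj - Y0) * (x - eps) \<le> real j * (eps^2 + b * (1 - eps))"
  proof (cases "x = 0")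
    case True
    have h1: "(Y0 - Yj) * eps \<le> (real j * eps) * eps"
      using bd e by (intro mult_right_mono) auto
    have h2: "real j * (b * (1 - eps)) \<ge> 0" using x e by auto
    have "(Yj - Y0) * (x - eps) = (Y0 - Yj) * eps" using True by (simp add: algebra_simps)
    also have "\<dots> \<le> real j * (eps^2 + b * (1 - eps))"
      using h1 h2 by (simp add: power2_eq_square distrib_left mult.assoc)
    finally show ?thesis .
  next
    case False
    then have "x = 1" "b = 1" using x by auto
    have h1: "(Yj - Y0) * (1 - eps) \<le> (real j * (1 - eps)) * (1 - eps)"
      using bd e by (intro mult_right_mono) auto
    have h2: "(1 - eps) * (1 - eps) \<le> eps^2 + (1 - eps)" using e
      by (simp add: power2_eq_square algebra_simps)
    have h3: "real j * ((1 - eps) * (1 - eps)) \<le> real j * (eps^2 + (1 - eps))"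
      using h2 by (intro mult_left_mono) auto
    show ?thesis using h1 h3 \<open>x = 1\<close> \<open>b = 1\<close> by (simp add: mult.assoc)
  qed
  have sq2: "(x - eps)^2 \<le> b + eps^2" using x e
    by (auto simp: power2_eq_square algebra_simps)
  have v: "vqueue eps X (s + Suc j) w = max (Yj + x - eps) 0" by (simp add: Yj_def x_def)
  have ex: "(Yj + x - eps)^2 = Yj^2 + 2*(Yj*(x-eps)) + (x-eps)^2" by (simp add: power2_eq_square algebra_simps)
  have sp: "Yj*(x-eps) = Y0*(x-eps) + (Yj-Y0)*(x-eps)" by (simp add: algebra_simps)
  have jj: "real j * (eps^2 + b * (1 - eps)) = real j * eps^2 + real j * (1 - eps) * b" by (simp add: algebra_simps)
  have IH: "(1/2) * Yj^2 - (1/2) * Y0^2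
     \<le> (\<Sum>i<j. Y0 * (X (s+i) w - eps)
              + ((1/2) * eps^2 + real i * eps^2 + ((1/2) + real i * (1 - eps)) * a (s+i) w))"
    using Suc.IH unfolding Y0_def Yj_def .
  show ?case
    unfolding v sum.lessThan_Suc Y0_def[symmetric] x_def[symmetric] b_def[symmetric]
    using IH sq ex sp jj cross sq2 by (simp add: algebra_simps)
qed


lemma sum_shift_ivl: "(\<Sum>n\<in>{(s::nat)..<s+T}. f n) = (\<Sum>i<T. f (s+i))"
  by (induction T) auto

lemma sum_arith_real: "(\<Sum>i<T. c + real i * d) * 2 = real T * c * 2 + real T * (real T - 1) * d"
  by (induction T) (auto simp: algebra_simps)

theorem lemma2:
  fixes M :: "'a measure" and F :: "nat \<Rightarrow> 'a measure"
    and a X :: "nat \<Rightarrow> 'a \<Rightarrow> real"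
    and lam eps :: real and T :: nat
  assumes "prob_space M"
    and "T \<ge> 1" and "0 \<le> eps" and "eps \<le> 1" and "0 \<le> lam" and "lam \<le> 1"
    and "\<And>n. subalgebra M (F n)"
    and "\<And>n. sets (F n) \<subseteq> sets (F (Suc n))"
    and "\<And>n. a n \<in> borel_measurable (F (Suc n))"
    and "\<And>n \<omega>. \<omega> \<in> space M \<Longrightarrow> a n \<omega> \<in> {0, 1}"
    and "\<And>n. prob_space.prob M {\<omega> \<in> space M. a n \<omega> = 1} = lam"
    and "\<And>n. prob_space.indep_set M (sets (F n))
                {a n -` A \<inter> space M | A. A \<in> sets borel}"
    and "\<And>n. X n \<in> borel_measurable (F (Suc n))"
    and "\<And>n \<omega>. \<omega> \<in> space M \<Longrightarrow> X n \<omega> \<in> {0, 1}"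
    and "\<And>n \<omega>. \<omega> \<in> space M \<Longrightarrow> X n \<omega> \<le> a n \<omega>"
  shows "AE \<omega> in M.
           real_cond_exp M (vimage_algebra (space M) (vqueue eps X (q * T)) borel)
             (\<lambda>\<omega>. (1/2) * (vqueue eps X (q * T + T) \<omega>)^2 - (1/2) * (vqueue eps X (q * T) \<omega>)^2) \<omega>
         \<le> Bk2 lam eps T * real T
           + real_cond_exp M (vimage_algebra (space M) (vqueue eps X (q * T)) borel)
             (\<lambda>\<omega>. vqueue eps X (q * T) \<omega> * (\<Sum>n\<in>{q * T ..< (q + 1) * T}. X n \<omega> - eps)) \<omega>"
proof -
  note PS = assms(1)
  interpret P: prob_space M by (rule PS)
  note e = assms(3,4)
  note subF = assms(7) and Fmono1 = assms(8) and a_meas = assms(9) and a01 = assms(10)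
    and a_prob = assms(11) and indep = assms(12) and X_meas = assms(13) and X01 = assms(14)
    and Xa = assms(15)
  define s where "s = q * T"
  define Y where "Y = vqueue eps X"
  define G where "G = vimage_algebra (space M) (Y s) borel"
  have spF: "space (F n) = space M" for n using subF[of n] by (simp add: subalgebra_def)
  have Fmono: "sets (F m) \<subseteq> sets (F n)" if "m \<le> n" for m n
    using lift_Suc_mono_le[of "\<lambda>n. sets (F n)", OF Fmono1 that] .
  have lift: "f \<in> borel_measurable (F n)" if "m \<le> n" "f \<in> borel_measurable (F m)" for f m n
  proof (rule measurable_from_subalg[OF _ that(2)])
    show "subalgebra (F n) (F m)" using Fmono[OF that(1)] spF by (simp add: subalgebra_def)
  qed
  have toM: "f \<in> borel_measurable M" if "f \<in> borel_measurable (F n)" for f n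
    by (rule measurable_from_subalg[OF subF that])
  have Ymeas: "Y m \<in> borel_measurable (F m)" for m
  proof (induction m)
    case 0 then show ?case by (simp add: Y_def)
  next
    case (Suc m)
    have [measurable]: "Y m \<in> borel_measurable (F (Suc m))" by (rule lift[OF _ Suc]) simp
    have [measurable]: "X m \<in> borel_measurable (F (Suc m))" by (rule X_meas)
    have "Y (Suc m) = (\<lambda>w. max (Y m w + X m w - eps) 0)" by (simp add: Y_def fun_eq_iff)
    then show ?case by simp
  qed
  have YM [measurable]: "Y m \<in> borel_measurable M" for m by (rule toM[OF Ymeas])
  have XM [measurable]: "X m \<in> borel_measurable M" for m by (rule toM[OF X_meas])
  have aM [measurable]: "a m \<in> borel_measurable M" for m by (rule toM[OF a_meas])
  have setsG: "sets G = {Y s -` A \<inter> space M | A. A \<in> sets borel}"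
    unfolding G_def by (rule sets_vimage_algebra2) simp
  have GF: "sets G \<subseteq> sets (F n)" if "s \<le> n" for n
  proof
    fix A assume "A \<in> sets G"
    then obtain B where B: "A = Y s -` B \<inter> space M" "B \<in> sets borel" using setsG by auto
    have "Y s \<in> borel_measurable (F n)" by (rule lift[OF that Ymeas])
    then have "Y s -` B \<inter> space (F n) \<in> sets (F n)" using B(2) by (rule measurable_sets)
    then show "A \<in> sets (F n)" using B(1) spF by simp
  qed
  have subG: "subalgebra M G"
    unfolding subalgebra_def
  proof
    show "sets G \<subseteq> sets M"
    proof
      fix A assume "A \<in> sets G"
      then obtain B where B: "A = Y s -` B \<inter> space M" "B \<in> sets borel" using setsG by auto
      then show "A \<in> sets M" by simp
    qed
  qed (simp add: G_def)
  interpret S: sigma_finite_subalgebra M G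
    by (rule finite_measure_subalgebra_is_sigma_finite)
       (simp add: finite_measure_subalgebra_def finite_measure_subalgebra_axioms_def subG P.finite_measure_axioms)
  have Ynn: "Y m w \<ge> 0" for m w unfolding Y_def by (rule vq_nonneg)
  have Yle: "Y m w \<le> real m" if "w \<in> space M" for m w
    unfolding Y_def
  proof (rule vq_le)
    fix n show "X n w \<le> 1" using X01[OF that, of n] by auto
  qed (rule e(1))
  have intbd: "integrable M f" if "f \<in> borel_measurable M" "\<And>w. w \<in> space M \<Longrightarrow> \<bar>f w\<bar> \<le> B" for f :: "'a \<Rightarrow> real" and B
  proof (rule P.integrable_const_bound)
    show "AE x in M. norm (f x) \<le> B" using that(2) by (intro AE_I2) auto
  qed (rule that(1))
  have aint: "integrable M (a n)" for n
  proof (rule intbd[of _ 1])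
    fix w assume "w \<in> space M" then show "\<bar>a n w\<bar> \<le> 1" using a01[of w n] by auto
  qed simp

  have cond_a: "AE w in M. real_cond_exp M G (a n) w = lam" if "s \<le> n" for n
  proof (rule S.real_cond_exp_charact)
    fix A assume AG: "A \<in> sets G"
    have AF: "A \<in> sets (F n)" using GF[OF that] AG by auto
    have AM: "A \<in> sets M" using AG subG by (auto simp: subalgebra_def)
    define E where "E = {w \<in> space M. a n w = 1}"
    have EE: "E \<in> {a n -` B \<inter> space M | B. B \<in> sets borel}"
      unfolding E_def by (intro CollectI exI[of _ "{1}"]) auto
    have EM: "E \<in> sets M" unfolding E_def by measurable
    have pr: "P.prob (A \<inter> E) = P.prob A * lam"
      using P.indep_setD[OF indep[of n] AF EE] a_prob[of n] by (simp add: E_def)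
    have "(\<integral>w\<in>A. a n w \<partial>M) = (\<integral>w. indicator (A \<inter> E) w \<partial>M)"
      unfolding set_lebesgue_integral_def
    proof (rule Bochner_Integration.integral_cong[OF refl])
      fix w assume "w \<in> space M"
      then show "indicator A w *\<^sub>R a n w = indicator (A \<inter> E) w"
        using a01[of w n] by (auto simp: E_def indicator_def)
    qed
    also have "\<dots> = P.prob A * lam" using pr AM EM by (simp add: Int_absorb2 sets.sets_into_space inf.absorb1 Int_assoc)
    also have "\<dots> = (\<integral>w\<in>A. lam \<partial>M)"
      unfolding set_lebesgue_integral_def using AM by (simp add: Int_absorb2 sets.sets_into_space)
    finally show "(\<integral>w\<in>A. a n w \<partial>M) = (\<integral>w\<in>A. lam \<partial>M)" .
  qed (simp_all add: aint)

  define c :: "nat \<Rightarrow> real" where "c i = (1/2) * eps^2 + real i * eps^2" for i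
  define d :: "nat \<Rightarrow> real" where "d i = (1/2) + real i * (1 - eps)" for i
  define f where "f = (\<lambda>w. (1/2) * (Y (s + T) w)^2 - (1/2) * (Y s w)^2)"
  define g where "g = (\<lambda>w. Y s w * (\<Sum>n\<in>{s ..< (q + 1) * T}. X n w - eps))"
  define t where "t = (\<lambda>i w. c i + d i * a (s + i) w)"
  define h where "h = (\<lambda>w. \<Sum>i<T. t i w)"
  have tint: "integrable M (t i)" for i
    unfolding t_def using aint[of "s+i"] by auto
  have fint: "integrable M f"
  proof (rule intbd[of _ "(1/2) * real (s+T)^2 + (1/2) * real s ^2"])
    fix w assume w: "w \<in> space M"
    have "(Y (s+T) w)^2 \<le> real (s+T)^2" using Yle[OF w, of "s+T"] Ynn by (intro power_mono) auto
    moreover have "(Y s w)^2 \<le> real s^2" using Yle[OF w] Ynn by (intro power_mono) auto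
    ultimately show "\<bar>f w\<bar> \<le> (1/2) * real (s+T)^2 + (1/2) * real s ^2"
      unfolding f_def using zero_le_power2[of "Y s w"] zero_le_power2[of "Y (s+T) w"] by linarith
  qed (simp add: f_def)
  have gint: "integrable M g"
  proof (rule intbd[of _ "real s * (\<Sum>n\<in>{s ..< (q + 1) * T}. 1 + eps)"])
    fix w assume w: "w \<in> space M"
    have "\<bar>\<Sum>n\<in>{s ..< (q + 1) * T}. X n w - eps\<bar> \<le> (\<Sum>n\<in>{s ..< (q + 1) * T}. \<bar>X n w - eps\<bar>)"
      by (rule sum_abs)
    also have "\<dots> \<le> (\<Sum>n\<in>{s ..< (q + 1) * T}. 1 + eps)"
    proof (rule sum_mono)
      fix n show "\<bar>X n w - eps\<bar> \<le> 1 + eps" using X01[OF w, of n] e by auto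
    qed
    finally have b: "\<bar>\<Sum>n\<in>{s ..< (q + 1) * T}. X n w - eps\<bar> \<le> (\<Sum>n\<in>{s ..< (q + 1) * T}. 1 + eps)" .
    have "\<bar>g w\<bar> = Y s w * \<bar>\<Sum>n\<in>{s ..< (q + 1) * T}. X n w - eps\<bar>"
      unfolding g_def using Ynn by (simp add: abs_mult)
    also have "\<dots> \<le> real s * (\<Sum>n\<in>{s ..< (q + 1) * T}. 1 + eps)"
      using Yle[OF w] Ynn b by (intro mult_mono) auto
    finally show "\<bar>g w\<bar> \<le> real s * (\<Sum>n\<in>{s ..< (q + 1) * T}. 1 + eps)" .
  qed (simp add: g_def)
  have hint: "integrable M h" unfolding h_def using tint by auto
  have pw: "f w \<le> g w + h w" if w: "w \<in> space M" for w
  proof -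
    have "f w \<le> (\<Sum>i<T. Y s w * (X (s+i) w - eps)
              + ((1/2) * eps^2 + real i * eps^2 + ((1/2) + real i * (1 - eps)) * a (s+i) w))"
      unfolding f_def Y_def
      by (rule vq_main) (use X01[OF w] a01[OF w] Xa[OF w] e in auto)
    also have "\<dots> = Y s w * (\<Sum>i<T. X (s+i) w - eps) + h w"
      by (simp add: h_def t_def c_def d_def sum.distrib sum_distrib_left)
    also have "(\<Sum>i<T. X (s+i) w - eps) = (\<Sum>n\<in>{s ..< (q + 1) * T}. X n w - eps)"
      using sum_shift_ivl[where s=s and T=T and f="\<lambda>n. X n w - eps"] by (simp add: s_def add.commute)
    finally show ?thesis by (simp add: g_def)
  qed
  have ct: "AE w in M. real_cond_exp M G (t i) w = c i + d i * lam" for i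
  proof -
    have 1: "AE w in M. real_cond_exp M G (t i) w = real_cond_exp M G (\<lambda>_. c i) w + real_cond_exp M G (\<lambda>w. d i * a (s+i) w) w"
      unfolding t_def by (rule S.real_cond_exp_add) (use aint in auto)
    have 2: "AE w in M. real_cond_exp M G (\<lambda>_. c i) w = c i"
      by (rule S.real_cond_exp_F_meas) auto
    have 3: "AE w in M. real_cond_exp M G (\<lambda>w. d i * a (s+i) w) w = d i * real_cond_exp M G (a (s+i)) w"
      by (rule S.real_cond_exp_cmult) (rule aint)
    have 4: "AE w in M. real_cond_exp M G (a (s+i)) w = lam" by (rule cond_a) simp
    show ?thesis using 1 2 3 4 by eventually_elim simp
  qed
  have ctall: "AE w in M. \<forall>i. real_cond_exp M G (t i) w = c i + d i * lam"
    using ct by (simp add: AE_all_countable)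
  have hsum: "AE w in M. real_cond_exp M G h w = (\<Sum>i<T. real_cond_exp M G (t i) w)"
    unfolding h_def by (rule S.real_cond_exp_sum) (rule tint)
  have mono: "AE w in M. real_cond_exp M G f w \<le> real_cond_exp M G (\<lambda>w. g w + h w) w"
    by (rule S.real_cond_exp_mono) (use pw fint gint hint in auto)
  have add: "AE w in M. real_cond_exp M G (\<lambda>w. g w + h w) w = real_cond_exp M G g w + real_cond_exp M G h w"
    by (rule S.real_cond_exp_add) (use gint hint in auto)
  have const: "(\<Sum>i<T. c i + d i * lam) = Bk2 lam eps T * real T"
  proof -
    have "(\<Sum>i<T. c i + d i * lam) = (\<Sum>i<T. ((1/2) * eps^2 + (1/2) * lam) + real i * (eps^2 + (1 - eps) * lam))"
      by (simp add: c_def d_def algebra_simps)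
    also have "\<dots> * 2 = real T * ((1/2) * eps^2 + (1/2) * lam) * 2 + real T * (real T - 1) * (eps^2 + (1 - eps) * lam)"
      by (rule sum_arith_real)
    finally have E: "(\<Sum>i<T. c i + d i * lam) * 2 = real T * ((1/2) * eps^2 + (1/2) * lam) * 2 + real T * (real T - 1) * (eps^2 + (1 - eps) * lam)" .
    have "Bk2 lam eps T * real T * 2 = real T * ((1/2) * eps^2 + (1/2) * lam) * 2 + real T * (real T - 1) * (eps^2 + (1 - eps) * lam)"
      unfolding Bk2_def by (simp add: field_simps)
    with E show ?thesis by linarith
  qed
  have "AE w in M. real_cond_exp M G f w \<le> Bk2 lam eps T * real T + real_cond_exp M G g w"
    using mono add hsum ctall
  proof eventually_elim
    case (elim w)
    then show ?case using const by simp
  qed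
  then show ?thesis unfolding f_def g_def G_def Y_def s_def .
qed

end
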